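(* There exists a constant $c>0$ such that for all integers $1\le m\le n$ and all integers $z\in[0,l(m,n)]$, \[\mathbb{P}_z\big(L(m,n)\cap U(m,n,z)\big)\ge c\,\frac{z}{\sqrt{n-m+1}}.\]
   Context: $X_1,X_2,\ldots$ are i.i.d. uniform on $\{-1,1\}$; under $\mathbb{P}_z$ the walk is $Z_i=z+\sum_{k=1}^i\prod_{j=1}^kX_j$ (a simple symmetric random walk started at $z$). Define $L(m,n)=\{Z_i>0\ \forall\, 1\le i\le n-m+1\}$, $U(m,n,z)=\{\max_{1\le i\le n-m+1}Z_i\ge 2z\}$, and $l(m,n)=\lfloor\sqrt{n-m+1}/2\rfloor\wedge\lfloor\sqrt{m-1}/2\rfloor$. *)

theory Defs
  imports "HOL-Probability.Probability"
begin

text \<open>Sign sequences (X_1,...,X_N) in {-1,1}^N, stored as a list; X_j = xs ! (j-1).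
  Under the uniform distribution on this set the X_j are i.i.d. uniform on {-1,1}.\<close>
definition sign_seqs :: "nat \<Rightarrow> int list set" where
  "sign_seqs N = {xs. length xs = N \<and> set xs \<subseteq> {-1, 1}}"

definition walk :: "int \<Rightarrow> int list \<Rightarrow> nat \<Rightarrow> int" where
  "walk z xs i = z + (\<Sum>k=1..i. \<Prod>j=1..k. xs ! (j - 1))"

definition Pz :: "nat \<Rightarrow> int list set \<Rightarrow> real" where
  "Pz N E = measure_pmf.prob (pmf_of_set (sign_seqs N)) E"

definition Lev :: "nat \<Rightarrow> nat \<Rightarrow> int \<Rightarrow> int list set" where
  "Lev m n z = {xs. \<forall>i\<in>{1..n - m + 1}. walk z xs i > 0}"

definition Uev :: "nat \<Rightarrow> nat \<Rightarrow> int \<Rightarrow> int list set" where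
  "Uev m n z = {xs. (MAX i\<in>{1..n - m + 1}. walk z xs i) \<ge> 2 * z}"

definition lfun :: "nat \<Rightarrow> nat \<Rightarrow> int" where
  "lfun m n = min \<lfloor>sqrt (real (n - m + 1)) / 2\<rfloor> \<lfloor>sqrt (real (m - 1)) / 2\<rfloor>"

end

theory Submission
  imports Defs
begin

definition wk :: "nat \<Rightarrow> int list \<Rightarrow> nat \<Rightarrow> int" where
  "wk N xs i = (if i \<le> N then walk 0 xs i else 0)"

definition cnt :: "nat \<Rightarrow> ((nat \<Rightarrow> int) \<Rightarrow> bool) \<Rightarrow> nat" where
  "cnt N Q = card {xs \<in> sign_seqs N. Q (wk N xs)}"

definition up :: "nat \<Rightarrow> int \<Rightarrow> (nat \<Rightarrow> int) \<Rightarrow> nat \<Rightarrow> int" where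
  "up N x w = (\<lambda>i. if i = 0 \<or> i > Suc N then 0 else x + w (i - 1))"

fun flip :: "int list \<Rightarrow> int list" where
  "flip [] = []" | "flip (y # ys) = (- y) # ys"

lemma prod_shift: "(\<Prod>j=1..k. xs ! (j - 1)) = (\<Prod>j<k. xs ! j)"
  by (induction k) (auto simp: prod.cl_ivl_Suc)

lemma walk0: "walk 0 xs i = (\<Sum>k=1..i. \<Prod>j<k. xs ! j)"
  unfolding walk_def prod_shift by simp

lemma walk_z: "walk z xs i = z + walk 0 xs i"
  unfolding walk_def by simp

lemma walk0_0[simp]: "walk 0 xs 0 = 0"
  unfolding walk_def by simp

lemma walk0_Cons: "walk 0 (x # ys) (Suc i) = x + x * walk 0 ys i"
proof (induction i)
  case 0
  then show ?case by (simp add: walk0)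
next
  case (Suc i)
  have "walk 0 (x # ys) (Suc (Suc i)) = walk 0 (x # ys) (Suc i) + (\<Prod>j<Suc (Suc i). (x # ys) ! j)"
    by (simp add: walk0)
  also have "(\<Prod>j<Suc (Suc i). (x # ys) ! j) = x * (\<Prod>j<Suc i. ys ! j)"
    by (subst prod.lessThan_Suc_shift) simp
  also have "walk 0 ys (Suc i) = walk 0 ys i + (\<Prod>j<Suc i. ys ! j)"
    by (simp add: walk0)
  ultimately show ?case using Suc by (simp add: algebra_simps)
qed

lemma wk_0[simp]: "wk N xs 0 = 0"
  by (simp add: wk_def)

lemma wk_Cons: "wk (Suc N) (x # ys) = (\<lambda>i. if i = 0 \<or> i > Suc N then 0 else x * (1 + wk N ys (i - 1)))"
proof
  fix i show "wk (Suc N) (x # ys) i = (if i = 0 \<or> i > Suc N then 0 else x * (1 + wk N ys (i - 1)))"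
    by (cases i) (auto simp: wk_def walk0_Cons algebra_simps)
qed

lemma finite_ss[simp]: "finite (sign_seqs N)"
proof -
  have "sign_seqs N = {xs. set xs \<subseteq> {-1, 1} \<and> length xs = N}"
    unfolding sign_seqs_def by auto
  then show ?thesis using finite_lists_length_eq[of "{-1,1::int}" N] by simp
qed

lemma card_ss: "card (sign_seqs N) = 2 ^ N"
proof -
  have "sign_seqs N = {xs. set xs \<subseteq> {-1, 1} \<and> length xs = N}"
    unfolding sign_seqs_def by auto
  then show ?thesis using card_lists_length_eq[of "{-1,1::int}" N] by (simp add: numeral_2_eq_2)
qed

lemma ss_ne: "sign_seqs N \<noteq> {}"
  using card_ss[of N] by (metis card.empty zero_neq_numeral power_not_zero)

lemma ss_0: "sign_seqs 0 = {[]}"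
  unfolding sign_seqs_def by auto

lemma ss_Suc: "sign_seqs (Suc N) = Cons 1 ` sign_seqs N \<union> Cons (-1) ` sign_seqs N"
proof
  show "sign_seqs (Suc N) \<subseteq> Cons 1 ` sign_seqs N \<union> Cons (-1) ` sign_seqs N"
  proof
    fix xs assume "xs \<in> sign_seqs (Suc N)"
    then obtain y ys where xs: "xs = y # ys" "length ys = N" "y \<in> {-1,1}" "set ys \<subseteq> {-1,1}"
      unfolding sign_seqs_def by (auto simp: length_Suc_conv)
    then show "xs \<in> Cons 1 ` sign_seqs N \<union> Cons (-1) ` sign_seqs N"
      unfolding sign_seqs_def by auto
  qed
qed (auto simp: sign_seqs_def)

lemma cnt_cong: "(\<And>xs. xs \<in> sign_seqs N \<Longrightarrow> Q (wk N xs) = Q' (wk N xs)) \<Longrightarrow> cnt N Q = cnt N Q'"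
  unfolding cnt_def by (metis (mono_tags, lifting) Collect_cong)

lemma cnt_0: "cnt 0 Q = (if Q (\<lambda>_. 0) then 1 else 0)"
proof -
  have "wk 0 [] = (\<lambda>_. 0)" by (auto simp: wk_def)
  then have "{xs \<in> {[]}. Q (wk 0 xs)} = (if Q (\<lambda>_. 0) then {[]} else {})" by auto
  then show ?thesis unfolding cnt_def ss_0 by simp
qed

lemma cnt_step0: "cnt (Suc N) Q = card {ys \<in> sign_seqs N. Q (wk (Suc N) (1 # ys))}
   + card {ys \<in> sign_seqs N. Q (wk (Suc N) ((-1) # ys))}"
proof -
  have "{xs \<in> sign_seqs (Suc N). Q (wk (Suc N) xs)} =
     Cons 1 ` {ys \<in> sign_seqs N. Q (wk (Suc N) (1 # ys))} \<union> Cons (-1) ` {ys \<in> sign_seqs N. Q (wk (Suc N) ((-1) # ys))}"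
    unfolding ss_Suc by auto
  moreover have "card (Cons 1 ` {ys \<in> sign_seqs N. Q (wk (Suc N) (1 # ys))} \<union> Cons (-1) ` {ys \<in> sign_seqs N. Q (wk (Suc N) ((-1) # ys))})
    = card (Cons 1 ` {ys \<in> sign_seqs N. Q (wk (Suc N) (1 # ys))}) + card (Cons (-1) ` {ys \<in> sign_seqs N. Q (wk (Suc N) ((-1) # ys))})"
    by (rule card_Un_disjoint) auto
  ultimately show ?thesis unfolding cnt_def by (simp add: card_image)
qed

lemma flip_ss: "xs \<in> sign_seqs N \<Longrightarrow> flip xs \<in> sign_seqs N"
  by (cases xs) (auto simp: sign_seqs_def)

lemma flip_flip[simp]: "flip (flip xs) = xs"
  by (cases xs) auto

lemma wk_flip: "xs \<in> sign_seqs N \<Longrightarrow> wk N (flip xs) = (\<lambda>i. - wk N xs i)"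
proof (cases xs)
  case Nil
  assume "xs \<in> sign_seqs N"
  with Nil have "N = 0" by (simp add: sign_seqs_def)
  with Nil show ?thesis by (auto simp: wk_def)
next
  case (Cons y ys)
  assume "xs \<in> sign_seqs N"
  with Cons obtain M where "N = Suc M" by (cases N) (auto simp: sign_seqs_def)
  with Cons show ?thesis by (auto simp: wk_Cons)
qed

lemma cnt_neg: "cnt N Q = cnt N (\<lambda>w. Q (\<lambda>i. - w i))"
proof -
  have "flip ` {xs \<in> sign_seqs N. Q (\<lambda>i. - wk N xs i)} = {xs \<in> sign_seqs N. Q (wk N xs)}"
  proof
    show "flip ` {xs \<in> sign_seqs N. Q (\<lambda>i. - wk N xs i)} \<subseteq> {xs \<in> sign_seqs N. Q (wk N xs)}"
      using flip_ss wk_flip by auto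
  next
    show "{xs \<in> sign_seqs N. Q (wk N xs)} \<subseteq> flip ` {xs \<in> sign_seqs N. Q (\<lambda>i. - wk N xs i)}"
    proof
      fix xs assume xs: "xs \<in> {xs \<in> sign_seqs N. Q (wk N xs)}"
      then have "flip xs \<in> {xs \<in> sign_seqs N. Q (\<lambda>i. - wk N xs i)}"
        using flip_ss wk_flip by auto
      then show "xs \<in> flip ` {xs \<in> sign_seqs N. Q (\<lambda>i. - wk N xs i)}"
        by (metis flip_flip image_eqI)
    qed
  qed
  moreover have "inj flip" by (metis flip_flip injI)
  ultimately show ?thesis unfolding cnt_def
    by (metis (no_types, lifting) card_image inj_on_subset subset_UNIV)
qed

lemma cnt_step: "cnt (Suc N) Q = cnt N (\<lambda>w. Q (up N 1 w)) + cnt N (\<lambda>w. Q (up N (-1) w))"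
proof -
  have 1: "wk (Suc N) (1 # ys) = up N 1 (wk N ys)" for ys
    by (auto simp: wk_Cons up_def)
  have 2: "wk (Suc N) ((-1) # ys) = up N (-1) (\<lambda>i. - wk N ys i)" for ys
    by (auto simp: wk_Cons up_def)
  have "card {ys \<in> sign_seqs N. Q (wk (Suc N) ((-1) # ys))} = cnt N (\<lambda>w. Q (up N (-1) (\<lambda>i. - w i)))"
    unfolding cnt_def 2 ..
  also have "\<dots> = cnt N (\<lambda>w. Q (up N (-1) w))"
    by (subst (2) cnt_neg) simp
  finally have B: "card {ys \<in> sign_seqs N. Q (wk (Suc N) ((-1) # ys))} = cnt N (\<lambda>w. Q (up N (-1) w))" .
  have A: "card {ys \<in> sign_seqs N. Q (wk (Suc N) (1 # ys))} = cnt N (\<lambda>w. Q (up N 1 w))"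
    unfolding cnt_def 1 ..
  show ?thesis using cnt_step0[of N Q] A B by simp
qed


definition Acnt :: "nat \<Rightarrow> int \<Rightarrow> int \<Rightarrow> nat" where
  "Acnt N x T = cnt N (\<lambda>w. (\<forall>i\<le>N. x + w i > 0) \<and> T \<le> x + w N)"

definition Bcnt :: "nat \<Rightarrow> int \<Rightarrow> nat" where
  "Bcnt N t = cnt N (\<lambda>w. t \<le> w N)"

lemma all_le_Suc: "(\<forall>i\<le>Suc N. P i) = (P 0 \<and> (\<forall>i\<le>N. P (Suc i)))"
  by (metis le_Suc_eq le_eq_less_or_eq less_Suc_eq_0_disj not_less_eq_eq)

lemma up_0[simp]: "up N x w 0 = 0" by (simp add: up_def)
lemma up_Suc[simp]: "i \<le> N \<Longrightarrow> up N x w (Suc i) = x + w i" by (simp add: up_def)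

lemma cnt_False: "cnt N (\<lambda>_. False) = 0"
  by (simp add: cnt_def)

lemma Acnt_0: "Acnt N 0 T = 0"
proof -
  have "Acnt N 0 T = cnt N (\<lambda>_. False)"
    unfolding Acnt_def by (rule cnt_cong) auto
  then show ?thesis by (simp add: cnt_False)
qed

lemma Acnt_step: assumes "x > 0" shows "Acnt (Suc N) x T = Acnt N (x+1) T + Acnt N (x-1) T"
proof -
  have 1: "(\<lambda>w. (\<forall>i\<le>Suc N. x + up N 1 w i > 0) \<and> T \<le> x + up N 1 w (Suc N))
        = (\<lambda>w. (\<forall>i\<le>N. (x+1) + w i > 0) \<and> T \<le> (x+1) + w N)"
    using assms by (auto simp: all_le_Suc algebra_simps)
  have 2: "(\<lambda>w. (\<forall>i\<le>Suc N. x + up N (-1) w i > 0) \<and> T \<le> x + up N (-1) w (Suc N))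
        = (\<lambda>w. (\<forall>i\<le>N. (x-1) + w i > 0) \<and> T \<le> (x-1) + w N)"
    using assms by (auto simp: all_le_Suc algebra_simps)
  show ?thesis unfolding Acnt_def cnt_step[of N] 1 2 ..
qed

lemma Bcnt_step: "Bcnt (Suc N) t = Bcnt N (t-1) + Bcnt N (t+1)"
proof -
  have 1: "(\<lambda>w. t \<le> up N 1 w (Suc N)) = (\<lambda>w. t - 1 \<le> w N)" by auto
  have 2: "(\<lambda>w. t \<le> up N (-1) w (Suc N)) = (\<lambda>w. t + 1 \<le> w N)" by auto
  show ?thesis unfolding Bcnt_def cnt_step[of N] 1 2 ..
qed

lemma A_formula: "x \<ge> 1 \<Longrightarrow> T \<ge> 1 \<Longrightarrow> int (Acnt N x T) = int (Bcnt N (T - x)) - int (Bcnt N (T + x))"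
proof (induction N arbitrary: x)
  case 0
  then show ?case by (simp add: Acnt_def Bcnt_def cnt_0)
next
  case (Suc N)
  have s: "Acnt (Suc N) x T = Acnt N (x+1) T + Acnt N (x-1) T" using Suc by (simp add: Acnt_step)
  have b1: "Bcnt (Suc N) (T - x) = Bcnt N (T - (x+1)) + Bcnt N (T - (x-1))"
    using Bcnt_step[of N "T - x"] by (simp add: algebra_simps)
  have b2: "Bcnt (Suc N) (T + x) = Bcnt N (T + (x-1)) + Bcnt N (T + (x+1))"
    using Bcnt_step[of N "T + x"] by (simp add: algebra_simps)
  have i1: "int (Acnt N (x+1) T) = int (Bcnt N (T - (x+1))) - int (Bcnt N (T + (x+1)))"
    using Suc by simp
  show ?case
  proof (cases "x = 1")
    case True
    then show ?thesis using s b1 b2 i1 Acnt_0 by simp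
  next
    case False
    then have i2: "int (Acnt N (x-1) T) = int (Bcnt N (T - (x-1))) - int (Bcnt N (T + (x-1)))"
      using Suc by simp
    then show ?thesis using s b1 b2 i1 by simp
  qed
qed

lemma pN_bound: "cnt N (\<lambda>w. w N = int (2*j) - int N) \<ge> N choose j"
proof (induction N arbitrary: j)
  case 0
  then show ?case by (simp add: cnt_0)
next
  case (Suc N)
  have st: "cnt (Suc N) (\<lambda>w. w (Suc N) = int (2*j) - int (Suc N))
     = cnt N (\<lambda>w. w N = int (2*j) - int N - 2) + cnt N (\<lambda>w. w N = int (2*j) - int N)"
  proof -
    have 1: "(\<lambda>w. up N 1 w (Suc N) = int (2*j) - int (Suc N)) = (\<lambda>w. w N = int (2*j) - int N - 2)" by auto
    have 2: "(\<lambda>w. up N (-1) w (Suc N) = int (2*j) - int (Suc N)) = (\<lambda>w. w N = int (2*j) - int N)" by auto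
    show ?thesis unfolding cnt_step[of N] 1 2 ..
  qed
  show ?case
  proof (cases j)
    case 0
    then show ?thesis using st Suc.IH[of 0] by simp
  next
    case (Suc j')
    have "int (2*j) - int N - 2 = int (2*j') - int N" using Suc by simp
    then show ?thesis using st Suc.IH[of j'] Suc.IH[of j] \<open>j = Suc j'\<close> by simp
  qed
qed

lemma cnt_union_lower:
  assumes "finite I" "inj_on g I" "\<And>i. i \<in> I \<Longrightarrow> P (g i)"
  shows "(\<Sum>i\<in>I. cnt N (\<lambda>w. w N = g i)) \<le> cnt N (\<lambda>w. P (w N))"
proof -
  let ?A = "\<lambda>i. {xs \<in> sign_seqs N. wk N xs N = g i}"
  have "(\<Sum>i\<in>I. cnt N (\<lambda>w. w N = g i)) = card (\<Union>i\<in>I. ?A i)"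
    unfolding cnt_def
    by (rule card_UN_disjoint[symmetric]) (use assms in \<open>auto dest: inj_onD\<close>)
  also have "\<dots> \<le> cnt N (\<lambda>w. P (w N))"
    unfolding cnt_def by (rule card_mono) (use assms in auto)
  finally show ?thesis .
qed

lemma window: "int (Bcnt N a) - int (Bcnt N b) = int (cnt N (\<lambda>w. a \<le> w N \<and> w N < b))" if "a \<le> b"
proof -
  have "{xs \<in> sign_seqs N. a \<le> wk N xs N} = {xs \<in> sign_seqs N. b \<le> wk N xs N} \<union> {xs \<in> sign_seqs N. a \<le> wk N xs N \<and> wk N xs N < b}"
    using that by auto
  moreover have "card ({xs \<in> sign_seqs N. b \<le> wk N xs N} \<union> {xs \<in> sign_seqs N. a \<le> wk N xs N \<and> wk N xs N < b})
     = card {xs \<in> sign_seqs N. b \<le> wk N xs N} + card {xs \<in> sign_seqs N. a \<le> wk N xs N \<and> wk N xs N < b}"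
    by (rule card_Un_disjoint) auto
  ultimately have "Bcnt N a = Bcnt N b + cnt N (\<lambda>w. a \<le> w N \<and> w N < b)"
    unfolding Bcnt_def cnt_def by simp
  then show ?thesis by simp
qed


lemma binom_ratio: "real (Suc k) * real (n choose Suc k) = real (n - k) * real (n choose k)"
proof -
  have "Suc k * (n choose Suc k) = (n - k) * (n choose k)"
    using binomial_absorption[of k n] binomial_absorb_comp[of n k] by simp
  then show ?thesis by (metis of_nat_mult)
qed

lemma odd_central: "real (n+1) * real ((2*n+1) choose n) = real (2*n+1) * real ((2*n) choose n)"
proof -
  have "(2*n+1) choose n = (2*n+1) choose (n+1)"
    using binomial_symmetric[of "n+1" "2*n+1"] by simp
  moreover have "Suc n * (Suc (2*n) choose Suc n) = Suc (2*n) * ((2*n) choose n)"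
    by (rule Suc_times_binomial)
  ultimately have "(n+1) * ((2*n+1) choose n) = (2*n+1) * ((2*n) choose n)" by simp
  then show ?thesis by (metis of_nat_mult)
qed

lemma even_step: "((2*n+2) choose (n+1)) = 2 * ((2*n+1) choose n)"
proof -
  have a: "Suc n * (Suc (Suc (2*n)) choose Suc n) = Suc (Suc (2*n)) * (Suc (2*n) choose n)"
    by (rule Suc_times_binomial)
  have b: "Suc (Suc (2*n)) = Suc n * 2" by simp
  have "Suc n * (Suc (Suc (2*n)) choose Suc n) = Suc n * (2 * (Suc (2*n) choose n))"
    unfolding a by (subst b) (simp only: mult.assoc)
  then have "(Suc (Suc (2*n)) choose Suc n) = 2 * (Suc (2*n) choose n)"
    by (rule mult_left_cancel[THEN iffD1, rotated]) simp
  moreover have "2*n+2 = Suc (Suc (2*n))" "n+1 = Suc n" "2*n+1 = Suc (2*n)" by simp_all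
  ultimately show ?thesis by (simp only:)
qed

lemma central_even: "n \<ge> 1 \<Longrightarrow> (16::real) ^ n \<le> real ((2*n) choose n) ^ 2 * (4 * real n)"
proof (induction n rule: nat_induct_at_least)
  case base
  then show ?case by simp
next
  case (Suc n)
  define c where "c = real ((2*n) choose n)"
  define d where "d = real ((2*n+1) choose n)"
  have cd: "real (n+1) * d = real (2*n+1) * c" unfolding c_def d_def by (rule odd_central)
  have e: "real ((2*Suc n) choose Suc n) = 2 * d" unfolding d_def using even_step[of n] by simp
  have IH: "16 ^ n \<le> c^2 * (4 * real n)" using Suc unfolding c_def by simp
  have c0: "c \<ge> 0" unfolding c_def by simp
  have key: "(real n + 1)^2 * (16 ^ Suc n) \<le> (real n + 1)^2 * ((2*d)^2 * (4 * (real n + 1)))"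
  proof -
    have "(real n + 1)^2 * ((2*d)^2 * (4 * (real n + 1))) = 16 * (real n + 1) * ((real n+1) * d)^2"
      by (simp add: power2_eq_square algebra_simps)
    also have "\<dots> = 16 * (real n + 1) * (real (2*n+1) * c)^2" using cd by (simp add: add.commute)
    also have "\<dots> = 16 * ((real n + 1) * (2 * real n + 1)^2) * c^2"
      by (simp add: power2_eq_square algebra_simps)
    finally have eq: "(real n + 1)^2 * ((2*d)^2 * (4 * (real n + 1))) = 16 * ((real n + 1) * (2 * real n + 1)^2) * c^2" .
    have "(real n + 1)^2 * (16 ^ Suc n) = 16 * ((real n + 1)^2 * 16^n)" by simp
    also have "\<dots> \<le> 16 * ((real n + 1)^2 * (c^2 * (4 * real n)))"
      using IH by (intro mult_left_mono) auto
    also have "\<dots> = 16 * ((4 * real n * (real n + 1)) * (real n + 1)) * c^2"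
      by (simp add: power2_eq_square algebra_simps)
    also have "\<dots> \<le> 16 * ((real n + 1) * (2 * real n + 1)^2) * c^2"
      by (intro mult_right_mono mult_left_mono) (auto simp: power2_eq_square algebra_simps)
    finally have "(real n + 1)^2 * (16 ^ Suc n) \<le> 16 * ((real n + 1) * (2 * real n + 1)^2) * c^2" .
    then show ?thesis using eq by linarith
  qed
  have fin: "16 ^ Suc n \<le> (2*d)^2 * (4 * (real n + 1))"
    using key by (rule mult_left_le_imp_le) simp
  show ?case unfolding e of_nat_Suc using fin by (simp add: add.commute)
qed

lemma central: "N \<ge> 1 \<Longrightarrow> (4::real) ^ N \<le> real (N choose (N div 2)) ^ 2 * (4 * real N)"
proof -
  assume N: "N \<ge> 1"
  have "N = 2*(N div 2) \<or> N = 2*(N div 2)+1" by presburger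
  then obtain n where "N = 2*n \<or> N = 2*n+1" by blast
  then show ?thesis
  proof
    assume Ne: "N = 2*n"
    then have "n \<ge> 1" using N by simp
    then have A: "(16::real) ^ n \<le> real ((2*n) choose n) ^ 2 * (4 * real n)" by (rule central_even)
    have B: "(4::real) ^ (2*n) = 16 ^ n" by (simp add: power_mult)
    have C: "real ((2*n) choose n) ^ 2 * (4 * real n) \<le> real ((2*n) choose n) ^ 2 * (4 * real (2*n))"
      by (intro mult_left_mono) auto
    have D: "2*n div 2 = n" by simp
    show ?thesis unfolding Ne D B using A C by (rule order_trans)
  next
    assume No: "N = 2*n+1"
    show ?thesis
    proof (cases "n = 0")
      case True
      then show ?thesis using No by simp
    next
      case False
      define c where "c = real ((2*n) choose n)"
      define d where "d = real ((2*n+1) choose n)"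
      have cd: "real (n+1) * d = real (2*n+1) * c" unfolding c_def d_def by (rule odd_central)
      have IH: "16 ^ n \<le> c^2 * (4 * real n)" using central_even[of n] False unfolding c_def by simp
      have div: "N div 2 = n" using No by simp
      have RN: "real N = 2 * real n + 1" using No by simp
      have P4: "(4::real) ^ N = 4 * 16 ^ n"
      proof -
        have "(4::real) ^ N = 4 ^ (2*n) * 4" unfolding No by (simp only: power_add power_one_right)
        also have "(4::real) ^ (2*n) = 16 ^ n" by (simp add: power_mult)
        finally show ?thesis by simp
      qed
      have "(real n + 1)^2 * (4 ^ N) \<le> (real n + 1)^2 * (d^2 * (4 * real N))"
      proof -
        have "(real n + 1)^2 * (d^2 * (4 * real N)) = 4 * (2 * real n + 1) * ((real n+1) * d)^2"
          unfolding RN by (simp add: power2_eq_square algebra_simps)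
        also have "\<dots> = 4 * (2 * real n + 1) * (real (2*n+1) * c)^2" using cd by (simp add: add.commute)
        also have "\<dots> = 4 * (2 * real n + 1)^3 * c^2"
          by (simp add: power2_eq_square power3_eq_cube algebra_simps)
        finally have eq: "(real n + 1)^2 * (d^2 * (4 * real N)) = 4 * (2 * real n + 1)^3 * c^2" .
        have "(real n + 1)^2 * (4 ^ N) = 4 * ((real n + 1)^2 * 16^n)"
          unfolding P4 by simp
        also have "\<dots> \<le> 4 * ((real n + 1)^2 * (c^2 * (4 * real n)))"
          using IH by (intro mult_left_mono) auto
        also have "\<dots> = 4 * (4 * real n * (real n + 1)^2) * c^2"
          by (simp add: power2_eq_square algebra_simps)
        also have "\<dots> \<le> 4 * (2 * real n + 1)^3 * c^2"
          by (intro mult_right_mono mult_left_mono) (auto simp: power2_eq_square power3_eq_cube algebra_simps)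
        finally show ?thesis using eq by linarith
      qed
      then have "4 ^ N \<le> d^2 * (4 * real N)"
        by (rule mult_left_le_imp_le) simp
      moreover have "d = real (N choose (N div 2))" unfolding d_def div unfolding No ..
      ultimately show ?thesis by simp
    qed
  qed
qed


lemma ratio_lower:
  assumes "h = N div 2" "t \<le> h"
  shows "real (N choose h) * ((real h - real t) / (real h + real t)) ^ t \<le> real (N choose (h + t))"
  using assms(2)
proof (induction t)
  case 0
  then show ?case by simp
next
  case (Suc t)
  have th: "t < h" using Suc by simp
  have Nh: "real h \<le> real N - real h" using assms(1) by linarith
  have hN: "h + t \<le> N" using assms(1) th by linarith
  define r where "r = (real h - real t) / (real h + real t)"
  define r' where "r' = (real h - real (Suc t)) / (real h + real (Suc t))"
  have r'0: "0 \<le> r'" unfolding r'_def using th by (intro divide_nonneg_pos) auto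
  have rr: "r' \<le> r" unfolding r_def r'_def using th
    by (auto simp: divide_simps algebra_simps)
  have r'q: "r' \<le> real (N - (h+t)) / real (Suc (h+t))"
  proof -
    have "r' = (real h - real t - 1) / (real h + real t + 1)" unfolding r'_def by (simp add: algebra_simps)
    also have "\<dots> \<le> (real N - real h - real t) / (real h + real t + 1)"
      using Nh by (intro divide_right_mono) auto
    also have "\<dots> = real (N - (h+t)) / real (Suc (h+t))" using hN by (simp add: of_nat_diff algebra_simps)
    finally show ?thesis .
  qed
  have br: "real (N choose Suc (h+t)) = real (N - (h+t)) / real (Suc (h+t)) * real (N choose (h+t))"
    using binom_ratio[of "h+t" N] by (simp add: field_simps)
  have IH: "real (N choose h) * r ^ t \<le> real (N choose (h + t))" using Suc unfolding r_def by simp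
  have "real (N choose h) * r' ^ Suc t = r' * (real (N choose h) * r' ^ t)" by simp
  also have "\<dots> \<le> r' * (real (N choose h) * r ^ t)"
    using r'0 rr by (intro mult_left_mono power_mono) auto
  also have "\<dots> \<le> r' * real (N choose (h+t))"
    using IH r'0 by (intro mult_left_mono) auto
  also have "\<dots> \<le> real (N - (h+t)) / real (Suc (h+t)) * real (N choose (h+t))"
    using r'q by (intro mult_right_mono) auto
  finally show ?case unfolding r'_def br[symmetric] by simp
qed

lemma exp_lower:
  fixes a :: real and t :: nat
  assumes "a \<ge> 1" "real t ^ 2 \<le> 2 * a"
  shows "exp (-4) \<le> (a / (a + 2 * real t)) ^ t"
proof -
  have "(a + 2 * real t) / a = 1 + 2 * real t / a" using assms by (simp add: field_simps)
  also have "\<dots> \<le> exp (2 * real t / a)" by (rule exp_ge_add_one_self)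
  finally have 1: "(a + 2 * real t) / a \<le> exp (2 * real t / a)" .
  have pos: "0 < (a + 2 * real t) / a" using assms by simp
  have "((a + 2 * real t) / a) ^ t \<le> exp (2 * real t / a) ^ t"
    using 1 pos by (intro power_mono) auto
  also have "\<dots> = exp (real t * (2 * real t / a))" by (simp add: exp_of_nat_mult[symmetric])
  also have "real t * (2 * real t / a) \<le> 4"
  proof -
    have "real t * (2 * real t / a) = 2 * real t ^ 2 / a" by (simp add: power2_eq_square)
    also have "\<dots> \<le> 4" using assms by (simp add: divide_simps)
    finally show ?thesis .
  qed
  then have "exp (real t * (2 * real t / a)) \<le> exp 4" by simp
  finally have 2: "((a + 2 * real t) / a) ^ t \<le> exp 4" .
  have "(a / (a + 2 * real t)) ^ t = 1 / ((a + 2 * real t) / a) ^ t"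
    by (simp add: power_divide)
  also have "\<dots> \<ge> 1 / exp 4"
    using 2 pos by (intro divide_left_mono) auto
  finally show ?thesis by (simp add: exp_minus field_simps)
qed


lemma window_facts:
  fixes N z i :: nat
  assumes "N \<ge> 4" "1 \<le> z" "4*z^2 \<le> N" "i < z"
  defines "h \<equiv> N div 2" and "j \<equiv> (N+z+1) div 2 + i"
  shows "h < j" "j - h \<le> h" "1 \<le> h - (j - h)" "(j - h)^2 \<le> 2 * (h - (j - h))"
proof -
  have h1: "2*h \<le> N" "N \<le> 2*h + 1" unfolding h_def by auto
  have j1: "N + z \<le> 2*((N+z+1) div 2)" "2*((N+z+1) div 2) \<le> N+z+1" by auto
  define t where "t = j - h"
  have hj: "h < j" using h1 j1 assms(2) unfolding j_def by linarith
  have t3: "2*t \<le> 3*z" using h1 j1 assms(4) unfolding t_def j_def by linarith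
  have zz: "4*(z*z) \<le> N" using assms(3) by (simp add: power2_eq_square)
  have main: "1 + t \<le> h \<and> t*t + 2*t \<le> 2*h"
  proof (cases "z = 1")
    case True
    then have "t \<le> 1" using t3 by simp
    moreover have "h \<ge> 2" using h1 assms(1) by linarith
    ultimately show ?thesis by (cases t) auto
  next
    case False
    then have z2: "z \<ge> 2" using assms(2) by simp
    have "2*z \<le> z*z" using z2 by (intro mult_right_mono) auto
    moreover have "(2*t)*(2*t) \<le> (3*z)*(3*z)" by (rule mult_mono[OF t3 t3]) auto
    then have "4*(t*t) \<le> 9*(z*z)" by (simp add: algebra_simps)
    ultimately show ?thesis using h1 zz t3 z2 by linarith
  qed
  show "h < j" by (rule hj)
  show "j - h \<le> h" "1 \<le> h - (j - h)" using main unfolding t_def by auto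
  show "(j - h)^2 \<le> 2 * (h - (j - h))" using main unfolding t_def power2_eq_square by linarith
qed

lemma binom_window:
  fixes N z i :: nat
  assumes "N \<ge> 4" "1 \<le> z" "4*z^2 \<le> N" "i < z"
  shows "exp (-4) * 2^N / (2 * sqrt (real N)) \<le> real (N choose ((N+z+1) div 2 + i))"
proof -
  define h where "h = N div 2"
  define j where "j = (N+z+1) div 2 + i"
  define t where "t = j - h"
  note F = window_facts[OF assms, folded h_def j_def, folded t_def]
  have jt: "j = h + t" using F(1) unfolding t_def by simp
  have R: "real (N choose h) * ((real h - real t) / (real h + real t)) ^ t \<le> real (N choose j)"
    using ratio_lower[OF h_def F(2)] jt by simp
  define a where "a = real h - real t"
  have a1: "a \<ge> 1" using F(3) F(2) unfolding a_def by linarith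
  have a2: "real t ^ 2 \<le> 2 * a" unfolding a_def using F(4) F(2)
    by (metis of_nat_diff of_nat_le_iff of_nat_mult of_nat_numeral of_nat_power)
  have E: "exp (-4) \<le> ((real h - real t) / (real h + real t)) ^ t"
    using exp_lower[OF a1 a2] unfolding a_def by (simp add: algebra_simps)
  have C: "(4::real) ^ N \<le> real (N choose h) ^ 2 * (4 * real N)"
    unfolding h_def using central assms(1) by simp
  have sN: "sqrt (real N) > 0" using assms(1) by simp
  have Cb: "2^N / (2 * sqrt (real N)) \<le> real (N choose h)"
  proof (rule power2_le_imp_le)
    have "(2^N / (2 * sqrt (real N)))^2 = 4^N / (4 * real N)"
    proof -
      have "(2::real)^(N*2) = 4^N" by (metis mult.commute power_mult numeral_Bit0 numeral_One power2_eq_square numeral_times_numeral num_double)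
      then show ?thesis by (simp add: power_divide power_mult_distrib power_mult[symmetric] mult.commute)
    qed
    also have "\<dots> \<le> real (N choose h) ^ 2" using C assms(1) by (simp add: divide_simps)
    finally show "(2^N / (2 * sqrt (real N)))^2 \<le> real (N choose h) ^ 2" .
  qed simp
  have "exp (-4) * 2^N / (2 * sqrt (real N)) = exp (-4) * (2^N / (2 * sqrt (real N)))" by simp
  also have "\<dots> \<le> ((real h - real t) / (real h + real t)) ^ t * real (N choose h)"
    using E Cb order_trans[OF exp_ge_zero E] by (intro mult_mono) auto
  also have "\<dots> \<le> real (N choose j)" using R by (simp add: mult.commute)
  finally show ?thesis unfolding j_def .
qed


lemma subset_LU:
  assumes "N = n - m + 1"
  shows "{xs \<in> sign_seqs N. (\<forall>i\<le>N. z + wk N xs i > 0) \<and> 2*z \<le> z + wk N xs N}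
     \<subseteq> sign_seqs N \<inter> (Lev m n z \<inter> Uev m n z)"
proof
  fix xs assume xs: "xs \<in> {xs \<in> sign_seqs N. (\<forall>i\<le>N. z + wk N xs i > 0) \<and> 2*z \<le> z + wk N xs N}"
  have "xs \<in> Lev m n z"
    unfolding Lev_def using xs assms by (auto simp: walk_z[of z xs] wk_def)
  moreover have "xs \<in> Uev m n z"
  proof -
    have "walk z xs N \<le> (MAX i\<in>{1..n - m + 1}. walk z xs i)"
      using assms by (intro Max_ge) simp_all
    moreover have "walk z xs N = z + wk N xs N" by (simp add: walk_z[of z xs] wk_def)
    moreover have "2*z \<le> z + wk N xs N" using xs by blast
    ultimately have "2*z \<le> (MAX i\<in>{1..n - m + 1}. walk z xs i)" by linarith
    then show ?thesis unfolding Uev_def by blast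
  qed
  moreover have "xs \<in> sign_seqs N" using xs by blast
  ultimately show "xs \<in> sign_seqs N \<inter> (Lev m n z \<inter> Uev m n z)" by blast
qed

theorem lemma20:
  shows "\<exists>c::real > 0. \<forall>(m::nat) (n::nat) (z::int).
           1 \<le> m \<and> m \<le> n \<and> 0 \<le> z \<and> z \<le> lfun m n \<longrightarrow>
           Pz (n - m + 1) (Lev m n z \<inter> Uev m n z) \<ge> c * real_of_int z / sqrt (real (n - m + 1))"
proof (intro exI[of _ "exp (-4) / 2"] conjI allI impI)
  show "(0::real) < exp (-4) / 2" by simp
  fix m n :: nat and z :: int
  assume H: "1 \<le> m \<and> m \<le> n \<and> 0 \<le> z \<and> z \<le> lfun m n"
  define N where "N = n - m + 1"
  have P: "Pz N X = real (card (sign_seqs N \<inter> X)) / 2 ^ N" for X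
    unfolding Pz_def using measure_pmf_of_set[OF ss_ne finite_ss] card_ss by simp
  show "exp (-4) / 2 * real_of_int z / sqrt (real (n - m + 1)) \<le> Pz (n - m + 1) (Lev m n z \<inter> Uev m n z)"
  proof (cases "z = 0")
    case True
    then show ?thesis unfolding Pz_def by simp
  next
    case False
    define zn where "zn = nat z"
    have zz: "z = int zn" "zn \<ge> 1" using H False unfolding zn_def by auto
    have "z \<le> lfun m n" using H by simp
    then have "z \<le> \<lfloor>sqrt (real N) / 2\<rfloor>" unfolding lfun_def N_def min.bounded_iff by (rule conjunct1)
    then have "real_of_int z \<le> real_of_int \<lfloor>sqrt (real N) / 2\<rfloor>" by (simp only: of_int_le_iff)
    then have "real_of_int z \<le> sqrt (real N) / 2"
      using of_int_floor_le[of "sqrt (real N) / 2"] by linarith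
    then have "2 * real zn \<le> sqrt (real N)" using zz by simp
    then have "(2 * real zn)^2 \<le> (sqrt (real N))^2" by (intro power_mono) auto
    then have "real (4 * zn^2) \<le> real N" by (simp add: power_mult_distrib)
    then have z4: "4 * zn^2 \<le> N" by linarith
    have "zn^2 \<ge> 1" using zz(2) by simp
    then have N4: "N \<ge> 4" using z4 by linarith
    have sN: "sqrt (real N) > 0" using N4 by simp
    define g where "g = (\<lambda>i. int (2 * ((N+zn+1) div 2 + i)) - int N)"
    have dm1: "(N+zn+1) mod 2 < 2" by simp
    have dm2: "(N+zn+1) div 2 * 2 + (N+zn+1) mod 2 = N+zn+1" by (rule div_mult_mod_eq)
    have j1: "N + zn \<le> 2*((N+zn+1) div 2)" "2*((N+zn+1) div 2) \<le> N+zn+1" using dm1 dm2 by linarith+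
    define c where "c = (N+zn+1) div 2"
    have c1: "int N + int zn \<le> 2 * int c" "2 * int c \<le> int N + int zn + 1"
      using j1 unfolding c_def by linarith+
    have ge: "g i = 2 * int c + 2 * int i - int N" for i unfolding g_def c_def by simp
    have inj: "inj_on g {..<zn}" unfolding inj_on_def ge by simp
    have gw: "z \<le> g i \<and> g i < 3*z" if "i \<in> {..<zn}" for i
    proof -
      have "i < zn" using that by simp
      then show ?thesis unfolding ge using c1 zz(1) by linarith
    qed
    have "(\<Sum>i<zn. exp (-4) * 2^N / (2 * sqrt (real N))) \<le> (\<Sum>i<zn. real (N choose ((N+zn+1) div 2 + i)))"
    proof (rule sum_mono)
      fix i assume "i \<in> {..<zn}"
      then have "i < zn" by simp
      then show "exp (-4) * 2^N / (2 * sqrt (real N)) \<le> real (N choose ((N+zn+1) div 2 + i))"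
        by (rule binom_window[OF N4 zz(2) z4])
    qed
    also have "\<dots> \<le> (\<Sum>i<zn. real (cnt N (\<lambda>w. w N = g i)))"
    proof (rule sum_mono)
      fix i assume "i \<in> {..<zn}"
      show "real (N choose ((N+zn+1) div 2 + i)) \<le> real (cnt N (\<lambda>w. w N = g i))"
        unfolding g_def by (rule of_nat_mono, rule pN_bound)
    qed
    also have "\<dots> \<le> real (cnt N (\<lambda>w. (\<lambda>v. z \<le> v \<and> v < 3*z) (w N)))"
    proof -
      have U: "(\<Sum>i<zn. cnt N (\<lambda>w. w N = g i)) \<le> cnt N (\<lambda>w. (\<lambda>v. z \<le> v \<and> v < 3*z) (w N))"
        by (rule cnt_union_lower[of "{..<zn}" g "\<lambda>v. z \<le> v \<and> v < 3*z" N]) (use inj gw in auto)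
      then have "real (\<Sum>i<zn. cnt N (\<lambda>w. w N = g i)) \<le> real (cnt N (\<lambda>w. (\<lambda>v. z \<le> v \<and> v < 3*z) (w N)))"
        by (rule of_nat_mono)
      then show ?thesis by (simp only: of_nat_sum)
    qed
    also have "real (cnt N (\<lambda>w. (\<lambda>v. z \<le> v \<and> v < 3*z) (w N))) = real (Acnt N z (2*z))"
    proof -
      have z1: "z \<ge> 1" using zz by simp
      have e1: "2*z - z = z" "2*z + z = 3*z" by simp_all
      have "int (Acnt N z (2*z)) = int (Bcnt N (2*z - z)) - int (Bcnt N (2*z + z))"
        by (rule A_formula) (use z1 in simp_all)
      also have "\<dots> = int (cnt N (\<lambda>w. z \<le> w N \<and> w N < 3*z))"
        unfolding e1 by (rule window) (use z1 in simp)
      finally have "int (Acnt N z (2*z)) = int (cnt N (\<lambda>w. z \<le> w N \<and> w N < 3*z))" .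
      then have "Acnt N z (2*z) = cnt N (\<lambda>w. z \<le> w N \<and> w N < 3*z)" by (simp only: of_nat_eq_iff)
      then show ?thesis by (simp only:)
    qed
    also have "real (Acnt N z (2*z)) \<le> real (card (sign_seqs N \<inter> (Lev m n z \<inter> Uev m n z)))"
      unfolding Acnt_def cnt_def
    proof (rule of_nat_mono, rule card_mono)
      show "finite (sign_seqs N \<inter> (Lev m n z \<inter> Uev m n z))" by simp
      show "{xs \<in> sign_seqs N. (\<forall>i\<le>N. 0 < z + wk N xs i) \<and> 2 * z \<le> z + wk N xs N}
          \<subseteq> sign_seqs N \<inter> (Lev m n z \<inter> Uev m n z)" by (rule subset_LU[OF N_def])
    qed
    finally have main: "real zn * (exp (-4) * 2^N / (2 * sqrt (real N))) \<le> real (card (sign_seqs N \<inter> (Lev m n z \<inter> Uev m n z)))"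
      by simp
    have "exp (-4) / 2 * real_of_int z / sqrt (real N) = real zn * (exp (-4) * 2^N / (2 * sqrt (real N))) / 2^N"
      using zz(1) by (simp add: field_simps)
    also have "\<dots> \<le> real (card (sign_seqs N \<inter> (Lev m n z \<inter> Uev m n z))) / 2^N"
      using main by (intro divide_right_mono) auto
    also have "\<dots> = Pz N (Lev m n z \<inter> Uev m n z)" using P by simp
    finally show ?thesis unfolding N_def .
  qed
qed

end
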